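(* Suppose $p\in[1,2)$, $\rho>0$ and $\mathbb{P}_\circ\in\mathscr{Q}_p$. Then $\varphi(X)=+\infty$ for every $X\in\mathcal{O}^{d,r}$.
   Context: Let $d,r$ be integers with $1\le r<d$ and $\mathcal{O}^{d,r}=\{X\in\mathbb{R}^{d\times r}: X^\top X=I_r\}$. For $p\ge 1$, $\mathscr{Q}_p$ denotes the set of Borel probability distributions $\mathbb{P}$ on $\mathbb{R}^d$ with $\mathbb{E}_{\mathbb{P}}\|\xi\|^p<\infty$. For $\mathbb{P}_1,\mathbb{P}_2\in\mathscr{Q}_p$ the type-$p$ Wasserstein distance is $\mathbb{W}_p(\mathbb{P}_1,\mathbb{P}_2)=\inf_{\mathbb{Q}\in\mathscr{J}(\mathbb{P}_1,\mathbb{P}_2)}\big(\mathbb{E}_{(\xi_1,\xi_2)\sim\mathbb{Q}}\|\xi_1-\xi_2\|_p^p\big)^{1/p}$, where $\mathscr{J}(\mathbb{P}_1,\mathbb{P}_2)$ is the set of joint distributions with marginals $\mathbb{P}_1,\mathbb{P}_2$ and $\|\cdot\|_p$ is the $\ell_p$ norm on $\mathbb{R}^d$. For $X\in\mathcal{O}^{d,r}$, $\varphi(X)=\sup\{\mathbb{E}_{\mathbb{P}}\big[\|(I_d-XX^\top)(\xi-\mathbb{E}_{\mathbb{P}}[\xi])\|_2^2\big]:\mathbb{P}\in\mathscr{Q}_p,\ \mathbb{W}_p(\mathbb{P},\mathbb{P}_\circ)\le\rho\}$. *)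

theory Defs
  imports "HOL-Probability.Probability"
begin

definition lpnorm :: "real \<Rightarrow> real ^ 'd \<Rightarrow> real" where
  "lpnorm p x = (\<Sum>i\<in>UNIV. \<bar>x $ i\<bar> powr p) powr (1 / p)"

definition Qp :: "real \<Rightarrow> (real ^ 'd) measure set" where
  "Qp p = {P. prob_space P \<and> sets P = sets borel \<and>
              (\<integral>\<^sup>+ x. ennreal (norm x powr p) \<partial>P) < \<infinity>}"

definition couplings :: "(real ^ 'd) measure \<Rightarrow> (real ^ 'd) measure
    \<Rightarrow> ((real ^ 'd) \<times> (real ^ 'd)) measure set" where
  "couplings P1 P2 = {Q. prob_space Q \<and> sets Q = sets borel \<and>
                         distr Q borel fst = P1 \<and> distr Q borel snd = P2}"

definition wasserstein :: "real \<Rightarrow> (real ^ 'd) measure \<Rightarrow> (real ^ 'd) measure \<Rightarrow> real" where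
  "wasserstein p P1 P2 =
     enn2real (INF Q\<in>couplings P1 P2.
        \<integral>\<^sup>+ z. ennreal (lpnorm p (fst z - snd z) powr p) \<partial>Q) powr (1 / p)"

definition phi :: "real \<Rightarrow> real \<Rightarrow> (real ^ 'd) measure \<Rightarrow> real ^ 'r ^ 'd \<Rightarrow> ennreal" where
  "phi p \<rho> P0 X =
     (SUP P\<in>{P\<in>Qp p. wasserstein p P P0 \<le> \<rho>}.
        \<integral>\<^sup>+ \<xi>. ennreal ((norm ((mat 1 - X ** transpose X) *v (\<xi> - integral\<^sup>L P (\<lambda>x. x))))\<^sup>2) \<partial>P)"

end

theory Submission imports Defs begin

lemma powr_add_le2:
  fixes a b p :: real
  assumes "0 \<le> a" "0 \<le> b" "0 \<le> p"
  shows "(a+b) powr p \<le> 2 powr p * (a powr p + b powr p)"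
proof -
  have "(a+b) powr p \<le> (2 * max a b) powr p"
    using assms by (intro powr_mono2) auto
  also have "\<dots> = 2 powr p * max a b powr p"
    using assms by (simp add: powr_mult)
  also have "max a b powr p \<le> a powr p + b powr p"
    by (cases "a \<le> b") (auto simp: max_def)
  hence "2 powr p * max a b powr p \<le> 2 powr p * (a powr p + b powr p)"
    by (intro mult_left_mono) auto
  finally show ?thesis .
qed

lemma kernel_exists:
  fixes X :: "real^'r^'d"
  assumes "CARD('r) < CARD('d)"
  obtains v where "v \<noteq> 0" "transpose X *v v = 0"
proof -
  define S where "S = range (\<lambda>j. column j X)"
  have "dim S \<le> card S" unfolding S_def by (intro dim_le_card) (auto intro: span_base)
  also have "card S \<le> CARD('r)" unfolding S_def by (rule card_image_le) auto
  finally have "dim S < DIM(real^'d)" using assms by simp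
  then obtain x where x: "x \<noteq> 0" "\<And>y. y \<in> span S \<Longrightarrow> orthogonal x y"
    using orthogonal_to_subspace_exists by blast
  have "transpose X *v x = 0"
  unfolding vec_eq_iff
  proof
    fix j
    have "column j X \<in> span S" unfolding S_def by (intro span_base) auto
    hence "x \<bullet> column j X = 0" using x(2) by (simp add: orthogonal_def)
    thus "(transpose X *v x) $ j = 0 $ j"
      by (simp add: matrix_vector_mult_def transpose_def column_def inner_vec_def mult.commute)
  qed
  with x show ?thesis using that by blast
qed

lemma lpnorm_scale:
  fixes v :: "real^'d"
  assumes "0 < p"
  shows "lpnorm p (c *\<^sub>R v) powr p = \<bar>c\<bar> powr p * (\<Sum>i\<in>UNIV. \<bar>v$i\<bar> powr p)"
proof -
  have "lpnorm p (c *\<^sub>R v) powr p = (\<Sum>i\<in>UNIV. \<bar>c * v$i\<bar> powr p)"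
    unfolding lpnorm_def using assms by (simp add: powr_powr powr_one sum_nonneg)
  also have "\<dots> = \<bar>c\<bar> powr p * (\<Sum>i\<in>UNIV. \<bar>v$i\<bar> powr p)"
    by (simp add: abs_mult powr_mult sum_distrib_left)
  finally show ?thesis .
qed


lemma meas_tests:
  fixes A :: "real^'d^'d" and m :: "real^'d" and p :: real
  shows "(\<lambda>x. ennreal ((norm (A *v (x - m)))\<^sup>2)) \<in> borel_measurable borel"
    and "(\<lambda>z::(real^'d)\<times>(real^'d). ennreal (lpnorm p (fst z - snd z) powr p)) \<in> borel_measurable borel"
    and "(\<lambda>x::real^'d. ennreal (norm x powr p)) \<in> borel_measurable borel"
proof -
  have [measurable]: "(*v) A \<in> borel_measurable borel"
    by (rule borel_measurable_continuous_onI, intro continuous_intros)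
  have [measurable]: "\<And>i. (\<lambda>x::real^'d. x $ i) \<in> borel_measurable borel"
    by (rule borel_measurable_continuous_onI, intro continuous_intros)
  have [measurable]: "(\<lambda>z::(real^'d)\<times>(real^'d). fst z - snd z) \<in> borel_measurable borel"
    by (rule borel_measurable_continuous_onI, intro continuous_intros)
  show "(\<lambda>x. ennreal ((norm (A *v (x - m)))\<^sup>2)) \<in> borel_measurable borel" by measurable
  show "(\<lambda>z::(real^'d)\<times>(real^'d). ennreal (lpnorm p (fst z - snd z) powr p)) \<in> borel_measurable borel"
    unfolding lpnorm_def by measurable
  show "(\<lambda>x::real^'d. ennreal (norm x powr p)) \<in> borel_measurable borel" by measurable
qed


lemma key:
  fixes X :: "real^'r^'d" and P0 :: "(real^'d) measure" and w :: "real^'d" and e p \<rho> :: real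
  assumes P0: "P0 \<in> Qp p" and p: "1 \<le> p" and e: "0 < e" "e \<le> 1"
    and cost: "e * lpnorm p w powr p \<le> \<rho> powr p" and rho: "0 < \<rho>"
  shows "ennreal (e * (norm ((mat 1 - X ** transpose X) *v w))\<^sup>2) \<le> phi p \<rho> P0 X"
proof -
  have P0prob: "prob_space P0" and P0sets: "sets P0 = sets borel"
    and P0mom: "(\<integral>\<^sup>+ x. ennreal (norm x powr p) \<partial>P0) < \<infinity>"
    using P0 by (auto simp: Qp_def)
  interpret P0: prob_space P0 by (rule P0prob)
  have P0meas: "measurable P0 N = measurable borel N" for N :: "'z measure"
    using P0sets by (rule measurable_cong_sets) simp
  have [measurable]: "(\<lambda>x. ennreal (norm x powr p)) \<in> borel_measurable P0"
    unfolding P0meas by (rule meas_tests(3))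
  define f :: "real \<Rightarrow> real" where "f s = (if s = 1 \<or> s = -1 then e/2 else if s = 0 then 1 - e else 0)" for s
  have f_nn: "\<And>s. 0 \<le> f s" using e by (simp add: f_def)
  have f_int: "(\<integral>\<^sup>+s. ennreal (f s) \<partial>count_space UNIV) = 1"
  proof -
    have "(\<integral>\<^sup>+s. ennreal (f s) \<partial>count_space UNIV) = (\<Sum>s\<in>{-1,0,1}. ennreal (f s))"
      by (rule nn_integral_count_space') (auto simp: f_def)
    also have "\<dots> = ennreal (\<Sum>s\<in>{-1,0,1}. f s)" using f_nn by simp
    also have "(\<Sum>s\<in>{-1,0,1}. f s) = 1" by (simp add: f_def)
    finally show ?thesis by simp
  qed
  define K where "K = embed_pmf f"
  have pmfK: "\<And>s. pmf K s = f s" unfolding K_def by (rule pmf_embed_pmf[OF f_nn f_int])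
  have setK: "set_pmf K \<subseteq> {-1,0,1}" by (auto simp: set_pmf_iff pmfK f_def split: if_splits)
  have intK: "(\<integral>\<^sup>+s. ennreal (h s) \<partial>measure_pmf K) = ennreal (e/2 * h 1 + (1-e) * h 0 + e/2 * h (-1))"
    if h: "\<And>s. 0 \<le> h s" for h :: "real \<Rightarrow> real"
  proof -
    have "(\<integral>\<^sup>+s. ennreal (h s) \<partial>measure_pmf K) = (\<Sum>s\<in>{-1,0,1}. ennreal (h s) * pmf K s)"
      using setK by (intro nn_integral_measure_pmf_support) auto
    also have "\<dots> = (\<Sum>s\<in>{-1,0,1}. ennreal (h s * f s))"
      by (simp add: pmfK ennreal_mult h f_nn)
    also have "\<dots> = ennreal (\<Sum>s\<in>{-1,0,1}. h s * f s)"
      using h f_nn by (intro sum_ennreal) auto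
    also have "(\<Sum>s\<in>{-1,0,1}. h s * f s) = e/2 * h 1 + (1-e) * h 0 + e/2 * h (-1)"
      by (simp add: f_def algebra_simps)
    finally show ?thesis .
  qed
  define M where "M = P0 \<Otimes>\<^sub>M measure_pmf K"
  have Mprob: "prob_space M" unfolding M_def
    by (intro prob_space_pair P0prob prob_space_measure_pmf)
  have [measurable]: "fst \<in> borel_measurable M"
    using measurable_fst[of P0 "measure_pmf K"] P0sets measurable_cong_sets unfolding M_def by blast
  have [measurable]: "snd \<in> borel_measurable M"
    unfolding M_def by (rule measurable_compose[OF measurable_snd]) simp
  have fstM: "fst \<in> measurable M P0" unfolding M_def by (rule measurable_fst)
  define g where "g z = fst z + snd z *\<^sub>R w" for z
  have g_meas[measurable]: "g \<in> borel_measurable M" unfolding g_def by measurable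
  define P where "P = distr M borel g"
  define C where "C = distr M borel (\<lambda>z. (g z, fst z))"
  have [measurable]: "(\<lambda>z. (g z, fst z)) \<in> borel_measurable M"
    by measurable
  have fst_b[measurable]: "(fst :: (real^'d)\<times>(real^'d) \<Rightarrow> real^'d) \<in> borel_measurable borel"
    by (rule borel_measurable_continuous_onI, intro continuous_intros)
  have snd_b[measurable]: "(snd :: (real^'d)\<times>(real^'d) \<Rightarrow> real^'d) \<in> borel_measurable borel"
    by (rule borel_measurable_continuous_onI, intro continuous_intros)
  have Pprob: "prob_space P" unfolding P_def
    by (rule prob_space.prob_space_distr[OF Mprob]) measurable
  have Pmom: "(\<integral>\<^sup>+ x. ennreal (norm x powr p) \<partial>P) < \<infinity>"
  proof -
    define B where "B x = 2 powr p * (norm x powr p + norm w powr p)" for x :: "real^'d"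
    have bnd: "norm (x + s *\<^sub>R w) powr p \<le> B x" if "\<bar>s\<bar> \<le> 1" for x s
    proof -
      have "norm (s *\<^sub>R w) \<le> norm w"
        using that by (simp add: mult_left_le_one_le)
      hence "norm (x + s *\<^sub>R w) \<le> norm x + norm w"
        using norm_triangle_ineq[of x "s *\<^sub>R w"] by linarith
      hence "norm (x + s *\<^sub>R w) powr p \<le> (norm x + norm w) powr p"
        using p by (intro powr_mono2) auto
      also have "\<dots> \<le> B x" unfolding B_def using p by (intro powr_add_le2) auto
      finally show ?thesis .
    qed
    have "(\<integral>\<^sup>+ x. ennreal (norm x powr p) \<partial>P) = (\<integral>\<^sup>+ z. ennreal (norm (g z) powr p) \<partial>M)"
      unfolding P_def by (rule nn_integral_distr) measurable
    also have "\<dots> = (\<integral>\<^sup>+ x. \<integral>\<^sup>+ s. ennreal (norm (x + s *\<^sub>R w) powr p) \<partial>measure_pmf K \<partial>P0)"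
    proof -
      have "(\<lambda>z. ennreal (norm (g z) powr p)) \<in> borel_measurable M" by measurable
      thus ?thesis using measure_pmf.nn_integral_fst[of "\<lambda>z. ennreal (norm (g z) powr p)" P0 K]
        by (simp add: M_def[symmetric] g_def)
    qed
    also have "\<dots> \<le> (\<integral>\<^sup>+ x. ennreal (B x) \<partial>P0)"
    proof (rule nn_integral_mono)
      fix x
      have "(\<integral>\<^sup>+ s. ennreal (norm (x + s *\<^sub>R w) powr p) \<partial>measure_pmf K)
          = ennreal (e/2 * norm (x + 1 *\<^sub>R w) powr p + (1-e) * norm (x + 0 *\<^sub>R w) powr p + e/2 * norm (x + (-1) *\<^sub>R w) powr p)"
        by (rule intK) simp
      also have "\<dots> \<le> ennreal (e/2 * B x + (1-e) * B x + e/2 * B x)"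
      proof (rule ennreal_leI)
        have b1: "norm (x + 1 *\<^sub>R w) powr p \<le> B x" by (rule bnd) simp
        have b0: "norm (x + 0 *\<^sub>R w) powr p \<le> B x" by (rule bnd) simp
        have b2: "norm (x + (-1) *\<^sub>R w) powr p \<le> B x" by (rule bnd) simp
        have "e/2 * norm (x + 1 *\<^sub>R w) powr p \<le> e/2 * B x" using e b1 by (intro mult_left_mono) auto
        moreover have "(1-e) * norm (x + 0 *\<^sub>R w) powr p \<le> (1-e) * B x" using e b0 by (intro mult_left_mono) auto
        moreover have "e/2 * norm (x + (-1) *\<^sub>R w) powr p \<le> e/2 * B x" using e b2 by (intro mult_left_mono) auto
        ultimately show "e/2 * norm (x + 1 *\<^sub>R w) powr p + (1-e) * norm (x + 0 *\<^sub>R w) powr p + e/2 * norm (x + (-1) *\<^sub>R w) powr p \<le> e/2 * B x + (1-e) * B x + e/2 * B x"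
          by linarith
      qed
      also have "e/2 * B x + (1-e) * B x + e/2 * B x = B x" by (simp add: algebra_simps)
      finally show "(\<integral>\<^sup>+ s. ennreal (norm (x + s *\<^sub>R w) powr p) \<partial>measure_pmf K) \<le> ennreal (B x)" .
    qed
    also have "\<dots> = ennreal (2 powr p) * ((\<integral>\<^sup>+ x. ennreal (norm x powr p) \<partial>P0) + ennreal (norm w powr p))"
    proof -
      have "(\<integral>\<^sup>+ x. ennreal (B x) \<partial>P0) = (\<integral>\<^sup>+ x. ennreal (2 powr p) * (ennreal (norm x powr p) + ennreal (norm w powr p)) \<partial>P0)"
        unfolding B_def by (intro nn_integral_cong) (simp add: ennreal_mult ennreal_plus)
      also have "\<dots> = ennreal (2 powr p) * (\<integral>\<^sup>+ x. (ennreal (norm x powr p) + ennreal (norm w powr p)) \<partial>P0)"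
        by (intro nn_integral_cmult) measurable
      also have "(\<integral>\<^sup>+ x. (ennreal (norm x powr p) + ennreal (norm w powr p)) \<partial>P0)
          = (\<integral>\<^sup>+ x. ennreal (norm x powr p) \<partial>P0) + (\<integral>\<^sup>+ x. ennreal (norm w powr p) \<partial>P0)"
        by (intro nn_integral_add) measurable
      finally show ?thesis by (simp add: P0.emeasure_space_1)
    qed
    also have "\<dots> < \<infinity>" using P0mom by (simp add: ennreal_mult_less_top)
    finally show ?thesis .
  qed
  have PQ: "P \<in> Qp p" using Pprob Pmom unfolding Qp_def by (simp add: P_def)
  define S where "S = (\<Sum>i\<in>UNIV. \<bar>w$i\<bar> powr p)"
  have S_nn: "0 \<le> S" unfolding S_def by (intro sum_nonneg) auto
  have lpS: "lpnorm p (c *\<^sub>R w) powr p = \<bar>c\<bar> powr p * S" for c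
    unfolding S_def using p by (intro lpnorm_scale) auto
  have CinJ: "C \<in> couplings P P0"
  proof -
    have "distr C borel fst = distr M borel (fst \<circ> (\<lambda>z. (g z, fst z)))"
      unfolding C_def by (rule distr_distr) measurable
    also have "\<dots> = P" by (simp add: P_def o_def)
    finally have 1: "distr C borel fst = P" .
    have "distr C borel snd = distr M borel (snd \<circ> (\<lambda>z. (g z, fst z)))"
      unfolding C_def by (rule distr_distr) measurable
    also have "\<dots> = distr (P0 \<Otimes>\<^sub>M measure_pmf K) P0 fst"
      unfolding M_def by (rule distr_cong) (auto simp: P0sets)
    also have "\<dots> = P0" by (rule measure_pmf.distr_pair_fst)
    finally have 2: "distr C borel snd = P0" .
    have "prob_space C" unfolding C_def
      by (rule prob_space.prob_space_distr[OF Mprob]) measurable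
    with 1 2 show ?thesis unfolding couplings_def by (simp add: C_def)
  qed
  have costC: "(\<integral>\<^sup>+ z. ennreal (lpnorm p (fst z - snd z) powr p) \<partial>C) = ennreal (e * S)"
  proof -
    have [measurable]: "(\<lambda>z::(real^'d)\<times>(real^'d). ennreal (lpnorm p (fst z - snd z) powr p)) \<in> borel_measurable borel"
      by (rule meas_tests(2))
    have "(\<integral>\<^sup>+ z. ennreal (lpnorm p (fst z - snd z) powr p) \<partial>C)
        = (\<integral>\<^sup>+ z. ennreal (lpnorm p (g z - fst z) powr p) \<partial>M)"
    proof -
      have h1: "(\<lambda>z. (g z, fst z)) \<in> measurable M borel" by measurable
      have m2: "borel_measurable (distr M borel (\<lambda>z. (g z, fst z))) = borel_measurable (borel :: ((real^'d)\<times>(real^'d)) measure)"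
        by (rule measurable_cong_sets) simp_all
      show ?thesis unfolding C_def
        by (subst nn_integral_distr[OF h1]) (simp_all add: m2 meas_tests(2))
    qed
    also have "\<dots> = (\<integral>\<^sup>+ z. ennreal (\<bar>snd z\<bar> powr p * S) \<partial>M)"
      by (intro nn_integral_cong) (simp add: g_def lpS)
    also have "\<dots> = (\<integral>\<^sup>+ x. \<integral>\<^sup>+ s. ennreal (\<bar>s\<bar> powr p * S) \<partial>measure_pmf K \<partial>P0)"
    proof -
      have "(\<lambda>z. ennreal (\<bar>snd z\<bar> powr p * S)) \<in> borel_measurable M" by measurable
      thus ?thesis using measure_pmf.nn_integral_fst[of "\<lambda>z. ennreal (\<bar>snd z\<bar> powr p * S)" P0 K]
        by (simp add: M_def[symmetric])
    qed
    also have "\<dots> = (\<integral>\<^sup>+ x. ennreal (e * S) \<partial>P0)"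
    proof (rule nn_integral_cong)
      fix x
      show "(\<integral>\<^sup>+ s. ennreal (\<bar>s\<bar> powr p * S) \<partial>measure_pmf K) = ennreal (e * S)"
        using S_nn p by (subst intK) (auto simp: algebra_simps)
    qed
    also have "\<dots> = ennreal (e * S)" by (simp add: P0.emeasure_space_1)
    finally show ?thesis .
  qed
  have W: "wasserstein p P P0 \<le> \<rho>"
  proof -
    let ?I = "(INF Q\<in>couplings P P0. \<integral>\<^sup>+ z. ennreal (lpnorm p (fst z - snd z) powr p) \<partial>Q)"
    have eS: "0 \<le> e * S" using e S_nn by simp
    have "?I \<le> ennreal (e * S)" by (rule INF_lower2[OF CinJ]) (simp add: costC)
    hence "enn2real ?I \<le> enn2real (ennreal (e * S))" by (rule enn2real_mono) simp
    hence I1: "enn2real ?I \<le> e * S" using eS by simp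
    have I0: "0 \<le> enn2real ?I" by simp
    have p1: "0 \<le> 1/p" using p by simp
    have "enn2real ?I powr (1/p) \<le> (e * S) powr (1/p)"
      by (rule powr_mono2[OF p1 I0 I1])
    also have eS2: "e * S \<le> \<rho> powr p" using cost lpS[of 1] by simp
    have "(e * S) powr (1/p) \<le> (\<rho> powr p) powr (1/p)"
      by (rule powr_mono2[OF p1 eS eS2])
    also have "(\<rho> powr p) powr (1/p) = \<rho>" using p rho by (simp add: powr_powr)
    finally show ?thesis unfolding wasserstein_def .
  qed
  define A where "A = mat 1 - X ** transpose X"
  define m where "m = integral\<^sup>L P (\<lambda>x. x)"
  have objint: "ennreal (e * (norm (A *v w))\<^sup>2) \<le> (\<integral>\<^sup>+ \<xi>. ennreal ((norm (A *v (\<xi> - m)))\<^sup>2) \<partial>P)"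
  proof -
    have mf: "(\<lambda>z. ennreal ((norm (A *v (g z - m)))\<^sup>2)) \<in> borel_measurable M"
    proof -
      have [measurable]: "(*v) A \<in> borel_measurable borel"
        by (rule borel_measurable_continuous_onI, intro continuous_intros)
      show ?thesis by measurable
    qed
    have "(\<integral>\<^sup>+ \<xi>. ennreal ((norm (A *v (\<xi> - m)))\<^sup>2) \<partial>P) = (\<integral>\<^sup>+ z. ennreal ((norm (A *v (g z - m)))\<^sup>2) \<partial>M)"
    proof -
      have m2: "borel_measurable (distr M borel g) = borel_measurable (borel :: (real^'d) measure)"
        by (rule measurable_cong_sets) simp_all
      show ?thesis unfolding P_def
        by (subst nn_integral_distr[OF g_meas]) (simp_all add: m2 meas_tests(1))
    qed
    also have "\<dots> = (\<integral>\<^sup>+ x. \<integral>\<^sup>+ s. ennreal ((norm (A *v (x + s *\<^sub>R w - m)))\<^sup>2) \<partial>measure_pmf K \<partial>P0)"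
      using mf measure_pmf.nn_integral_fst[of "\<lambda>z. ennreal ((norm (A *v (g z - m)))\<^sup>2)" P0 K]
      by (simp add: M_def[symmetric] g_def)
    also have "\<dots> \<ge> (\<integral>\<^sup>+ x. ennreal (e * (norm (A *v w))\<^sup>2) \<partial>P0)"
    proof (rule nn_integral_mono)
      fix x
      define b where "b = A *v (x - m)"
      define c where "c = A *v w"
      have hs: "A *v (x + s *\<^sub>R w - m) = b + s *\<^sub>R c" for s
        unfolding b_def c_def by (simp add: matrix_vector_right_distrib matrix_vector_mult_diff_distrib matrix_vector_mult_scaleR algebra_simps)
      have par: "(norm (b+c))\<^sup>2 + (norm (b-c))\<^sup>2 = 2*(norm b)\<^sup>2 + 2*(norm c)\<^sup>2"
        by (simp add: power2_norm_eq_inner inner_add_left inner_add_right inner_diff_left inner_diff_right inner_commute)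
      have "(\<integral>\<^sup>+ s. ennreal ((norm (A *v (x + s *\<^sub>R w - m)))\<^sup>2) \<partial>measure_pmf K)
          = ennreal (e/2 * (norm (b+c))\<^sup>2 + (1-e) * (norm b)\<^sup>2 + e/2 * (norm (b-c))\<^sup>2)"
      proof -
        have h1: "A *v (x + w - m) = b + c" using hs[of 1] by simp
        have h0: "A *v (x - m) = b" using hs[of 0] by simp
        have h2: "A *v (x - w - m) = b - c" using hs[of "-1"] by (simp add: algebra_simps)
        show ?thesis by (subst intK) (simp_all add: h1 h0 h2)
      qed
      also have "\<dots> \<ge> ennreal (e * (norm c)\<^sup>2)"
      proof (rule ennreal_leI)
        have "e/2 * (norm (b+c))\<^sup>2 + e/2 * (norm (b-c))\<^sup>2 = e * (norm b)\<^sup>2 + e * (norm c)\<^sup>2"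
        proof -
          have "e/2 * (norm (b+c))\<^sup>2 + e/2 * (norm (b-c))\<^sup>2 = e/2 * ((norm (b+c))\<^sup>2 + (norm (b-c))\<^sup>2)"
            by (simp add: algebra_simps)
          also have "\<dots> = e * (norm b)\<^sup>2 + e * (norm c)\<^sup>2" unfolding par by (simp add: algebra_simps)
          finally show ?thesis .
        qed
        moreover have "0 \<le> (1-e) * (norm b)\<^sup>2" using e by simp
        moreover have "0 \<le> e * (norm b)\<^sup>2" using e by simp
        ultimately show "e * (norm c)\<^sup>2 \<le> e/2 * (norm (b+c))\<^sup>2 + (1-e) * (norm b)\<^sup>2 + e/2 * (norm (b-c))\<^sup>2"
          by linarith
      qed
      finally show "ennreal (e * (norm (A *v w))\<^sup>2) \<le> (\<integral>\<^sup>+ s. ennreal ((norm (A *v (x + s *\<^sub>R w - m)))\<^sup>2) \<partial>measure_pmf K)"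
        by (simp add: c_def)
    qed
    also have "(\<integral>\<^sup>+ x. ennreal (e * (norm (A *v w))\<^sup>2) \<partial>P0) = ennreal (e * (norm (A *v w))\<^sup>2)"
      by (simp add: P0.emeasure_space_1)
    finally show ?thesis .
  qed
  have "P \<in> {P \<in> Qp p. wasserstein p P P0 \<le> \<rho>}" using PQ W by simp
  hence "(\<integral>\<^sup>+ \<xi>. ennreal ((norm (A *v (\<xi> - m)))\<^sup>2) \<partial>P) \<le> phi p \<rho> P0 X"
    unfolding phi_def A_def m_def by (rule SUP_upper)
  with objint show ?thesis unfolding A_def by simp
qed


theorem mainTheorem2:
  fixes X :: "real ^ 'r ^ 'd" and p \<rho> :: real and P0 :: "(real ^ 'd) measure"
  assumes "CARD('r) < CARD('d)"
    and "transpose X ** X = mat 1"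
    and "1 \<le> p" and "p < 2"
    and "\<rho> > 0"
    and "P0 \<in> Qp p"
  shows "phi p \<rho> P0 X = \<infinity>"
proof -
  note p = assms(3) and p2 = assms(4) and rho = assms(5) and P0 = assms(6)
  obtain v :: "real^'d" where v: "v \<noteq> 0" "transpose X *v v = 0"
    using kernel_exists[OF assms(1), of X] by blast
  define A where "A = mat 1 - X ** transpose X"
  have Av: "A *v v = v"
    unfolding A_def using v(2)
    by (simp add: matrix_vector_mult_diff_rdistrib matrix_vector_mul_assoc[symmetric])
  define c0 where "c0 = (\<Sum>i\<in>UNIV. \<bar>v$i\<bar> powr p)"
  have c0: "0 < c0"
  proof -
    obtain i where "v $ i \<noteq> 0" using v(1) by (metis vec_eq_iff zero_index)
    hence "0 < \<bar>v$i\<bar> powr p" by simp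
    thus ?thesis unfolding c0_def
      using sum_pos2[where i=i and I=UNIV and f="\<lambda>i. \<bar>v$i\<bar> powr p"] by auto
  qed
  define a where "a = (norm v)\<^sup>2"
  have a: "0 < a" using v(1) by (simp add: a_def)
  define K0 where "K0 = \<rho> powr p * a / c0"
  have K0: "0 < K0" using rho a c0 by (simp add: K0_def)
  have big: "ennreal B \<le> phi p \<rho> P0 X" if B: "0 < B" for B
  proof -
    define T1 where "T1 = (max 1 (B/K0)) powr (1/(2-p))"
    define T2 where "T2 = (max 1 (\<rho> powr p / c0)) powr (1/p)"
    define t where "t = max T1 T2"
    have T1: "1 \<le> T1" unfolding T1_def using p2 by (intro ge_one_powr_ge_zero) auto
    have t: "1 \<le> t" "0 < t" using T1 by (auto simp: t_def)
    have "T1 powr (2-p) \<le> t powr (2-p)" using T1 p2 by (intro powr_mono2) (auto simp: t_def)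
    moreover have "T1 powr (2-p) = max 1 (B/K0)" using p2 by (simp add: T1_def powr_powr)
    ultimately have tB: "B/K0 \<le> t powr (2-p)" by linarith
    have "T2 powr p \<le> t powr p" unfolding T2_def t_def using p
      by (intro powr_mono2) auto
    moreover have "T2 powr p = max 1 (\<rho> powr p / c0)" using p by (simp add: T2_def powr_powr)
    ultimately have tp: "\<rho> powr p / c0 \<le> t powr p" by linarith
    define e where "e = \<rho> powr p / (c0 * t powr p)"
    have e0: "0 < e" using rho c0 t by (simp add: e_def)
    have e1: "e \<le> 1" using tp c0 t by (simp add: e_def field_simps)
    have cost: "e * lpnorm p (t *\<^sub>R v) powr p \<le> \<rho> powr p"
      using lpnorm_scale[of p t v] p t c0 by (simp add: e_def c0_def[symmetric])
    have "ennreal (e * (norm (A *v (t *\<^sub>R v)))\<^sup>2) \<le> phi p \<rho> P0 X"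
      unfolding A_def by (rule key[OF P0 p e0 e1 cost rho])
    moreover have "e * (norm (A *v (t *\<^sub>R v)))\<^sup>2 = K0 * t powr (2-p)"
    proof -
      have "(norm (A *v (t *\<^sub>R v)))\<^sup>2 = t powr 2 * a"
        using t by (simp add: matrix_vector_mult_scaleR Av a_def power_mult_distrib powr_realpow)
      hence "e * (norm (A *v (t *\<^sub>R v)))\<^sup>2 = \<rho> powr p * a / c0 * (t powr 2 / t powr p)"
        by (simp add: e_def)
      also have "t powr 2 / t powr p = t powr (2-p)" by (simp add: powr_diff)
      finally show ?thesis by (simp add: K0_def)
    qed
    moreover have "B \<le> K0 * t powr (2-p)" using tB K0 by (simp add: field_simps)
    ultimately show ?thesis by (metis ennreal_leI order_trans)
  qed
  show ?thesis
  proof (rule ccontr)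
    assume "phi p \<rho> P0 X \<noteq> \<infinity>"
    then obtain r where r: "phi p \<rho> P0 X = ennreal r" "0 \<le> r"
      by (cases "phi p \<rho> P0 X") auto
    have "ennreal (r+1) \<le> ennreal r" using big[of "r+1"] r by simp
    thus False using r by simp
  qed
qed

end
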